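(* Let $\beta_0\in(0,1)$, $l>0$, $r\in\mathbb{N}$, and let $k_1>-1$, $k_2<-1$, $z_1>-1$, $z_2<-1$ satisfy $$z_1<-\frac{2r-1}{2r},\qquad 2rz_1+k_1+2r<0.$$ Define $g(x)=|x|^{k_1}e^{-|x|}$ for $|x|\le1$, $g(x)=|x|^{k_2}e^{-|x|}$ for $|x|>1$, and $f(x)=|x|^{z_1}e^{-|x|}$ for $|x|\le1$, $f(x)=|x|^{z_2}e^{-|x|}$ for $|x|>1$. Then there is a constant $K=K(\beta_0,k_1,k_2,z_1,z_2,l,r)$ such that for all $\beta\in(\beta_0,1)$ and all $\eta\neq0$, $$\int_{|\eta|}^{|\eta|/\beta}\frac{(g\bullet f^{\bullet 2r})(\zeta)}{|\zeta|^l}\,d\zeta\le (1-\beta)\,K\,|\eta|^{n}e^{-|\eta|},$$ where $n=2rz_1+k_1+2r-l+1$ if $|\eta|\le1$ and $n=\max\{k_2,z_2\}+1-l$ if $|\eta|>1$.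
   Context: Convolution: $(f\bullet g)(y)=\int_{\mathbb{R}}f(x)g(y-x)\,dx$; $f^{\bullet 2r}$ denotes the $2r$-fold convolution $f\bullet\cdots\bullet f$. *)

theory Defs
  imports "HOL-Analysis.Analysis"
begin

definition conv :: "(real \<Rightarrow> real) \<Rightarrow> (real \<Rightarrow> real) \<Rightarrow> real \<Rightarrow> real" where
  "conv f g y = (LINT x|lborel. f x * g (y - x))"

text \<open>m-fold convolution power f conv ... conv f (m copies); only used for m \<ge> 1.\<close>
fun conv_pow :: "(real \<Rightarrow> real) \<Rightarrow> nat \<Rightarrow> real \<Rightarrow> real" where
  "conv_pow f 0 = (\<lambda>_. 0)"
| "conv_pow f (Suc 0) = f"
| "conv_pow f (Suc (Suc n)) = conv f (conv_pow f (Suc n))"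

definition pw :: "real \<Rightarrow> real \<Rightarrow> real \<Rightarrow> real" where
  "pw a b x = (if \<bar>x\<bar> \<le> 1 then \<bar>x\<bar> powr a else \<bar>x\<bar> powr b) * exp (- \<bar>x\<bar>)"

end

theory Submission
  imports Defs
begin

lemma nn_even:
  fixes g :: "real \<Rightarrow> real"
  assumes [measurable]: "g \<in> borel_measurable borel" and nn: "\<And>x. 0 \<le> g x"
  shows "(\<integral>\<^sup>+x. ennreal (g \<bar>x\<bar>) \<partial>lborel) \<le> 2 * (\<integral>\<^sup>+x. ennreal (g x) * indicator {0..} x \<partial>lborel)"
proof -
  have "(\<integral>\<^sup>+x. ennreal (g \<bar>x\<bar>) \<partial>lborel) \<le>
      (\<integral>\<^sup>+x. ennreal (g x) * indicator {0..} x + ennreal (g (0 + -1 * x)) * indicator {0..} (0 + -1 * x) \<partial>lborel)"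
    by (intro nn_integral_mono) (auto simp: indicator_def)
  also have "\<dots> = (\<integral>\<^sup>+x. ennreal (g x) * indicator {0..} x \<partial>lborel) +
      (\<integral>\<^sup>+x. ennreal (g (0 + -1 * x)) * indicator {0..} (0 + -1 * x) \<partial>lborel)"
    by (intro nn_integral_add) auto
  also have "(\<integral>\<^sup>+x. ennreal (g (0 + -1 * x)) * indicator {0..} (0 + -1 * x) \<partial>lborel)
       = (\<integral>\<^sup>+x. ennreal (g x) * indicator {0..} x \<partial>lborel)"
    using nn_integral_real_affine[of "\<lambda>x. ennreal (g x) * indicator {0..} x" "-1" 0] by simp
  finally show ?thesis by (simp add: mult_2)
qed

lemma int_small:
  fixes p c :: real
  assumes "-1 < p" "0 \<le> c"
  shows "(\<integral>\<^sup>+x. ennreal (if \<bar>x\<bar> \<le> c then \<bar>x\<bar> powr p else 0) \<partial>lborel) \<le> ennreal (2 * (c powr (p+1) / (p+1)))"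
proof -
  have "(\<integral>\<^sup>+x. ennreal (if \<bar>x\<bar> \<le> c then \<bar>x\<bar> powr p else 0) \<partial>lborel)
     \<le> 2 * (\<integral>\<^sup>+x. ennreal (if \<bar>x\<bar> \<le> c then \<bar>x\<bar> powr p else 0) * indicator {0..} x \<partial>lborel)"
  proof -
    have m: "(\<lambda>x::real. if \<bar>x\<bar> \<le> c then \<bar>x\<bar> powr p else 0) \<in> borel_measurable borel" by measurable
    have nn: "\<And>x::real. 0 \<le> (if \<bar>x\<bar> \<le> c then \<bar>x\<bar> powr p else 0)" by simp
    show ?thesis using nn_even[OF m nn] by (simp cong: if_cong)
  qed
  also have "(\<integral>\<^sup>+x. ennreal (if \<bar>x\<bar> \<le> c then \<bar>x\<bar> powr p else 0) * indicator {0..} x \<partial>lborel)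
     = (\<integral>\<^sup>+x. ennreal (x powr p) * indicator {0..c} x \<partial>lborel)"
    by (intro nn_integral_cong) (auto simp: indicator_def)
  also have "\<dots> = ennreal (c powr (p+1) / (p+1))"
    by (rule nn_integral_has_integral_lebesgue'[OF _ has_integral_powr_from_0]) (use assms in auto)
  finally show ?thesis by (metis ennreal_mult' ennreal_numeral zero_le_numeral mult.commute)
qed

lemma int_large:
  fixes p c :: real
  assumes "p < -1" "0 < c"
  shows "(\<integral>\<^sup>+x. ennreal (if c \<le> \<bar>x\<bar> then \<bar>x\<bar> powr p else 0) \<partial>lborel) \<le> ennreal (2 * (-(c powr (p+1)) / (p+1)))"
proof -
  have "(\<integral>\<^sup>+x. ennreal (if c \<le> \<bar>x\<bar> then \<bar>x\<bar> powr p else 0) \<partial>lborel)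
     \<le> 2 * (\<integral>\<^sup>+x. ennreal (if c \<le> \<bar>x\<bar> then \<bar>x\<bar> powr p else 0) * indicator {0..} x \<partial>lborel)"
  proof -
    have m: "(\<lambda>x::real. if c \<le> \<bar>x\<bar> then \<bar>x\<bar> powr p else 0) \<in> borel_measurable borel" by measurable
    have nn: "\<And>x::real. 0 \<le> (if c \<le> \<bar>x\<bar> then \<bar>x\<bar> powr p else 0)" by simp
    show ?thesis using nn_even[OF m nn] by (simp cong: if_cong)
  qed
  also have "(\<integral>\<^sup>+x. ennreal (if c \<le> \<bar>x\<bar> then \<bar>x\<bar> powr p else 0) * indicator {0..} x \<partial>lborel)
     = (\<integral>\<^sup>+x. ennreal (x powr p) * indicator {c..} x \<partial>lborel)"
    using assms by (intro nn_integral_cong) (auto simp: indicator_def)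
  also have "\<dots> = ennreal (-(c powr (p+1)) / (p+1))"
    by (rule nn_integral_has_integral_lebesgue'[OF _ has_integral_powr_to_inf]) (use assms in auto)
  finally show ?thesis by (metis ennreal_mult' ennreal_numeral zero_le_numeral mult.commute)
qed

lemma nn_lin2:
  fixes f g :: "real \<Rightarrow> real"
  assumes [measurable]: "f \<in> borel_measurable borel" "g \<in> borel_measurable borel"
    and nf: "\<And>x. 0 \<le> f x" and ng: "\<And>x. 0 \<le> g x" and c: "0 \<le> c1" "0 \<le> c2"
    and F: "(\<integral>\<^sup>+x. ennreal (f x) \<partial>lborel) \<le> ennreal F" and G: "(\<integral>\<^sup>+x. ennreal (g x) \<partial>lborel) \<le> ennreal G"
    and FG: "0 \<le> F" "0 \<le> G"
  shows "(\<integral>\<^sup>+x. ennreal (c1 * f x + c2 * g x) \<partial>lborel) \<le> ennreal (c1 * F + c2 * G)"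
proof -
  have "(\<integral>\<^sup>+x. ennreal (c1 * f x + c2 * g x) \<partial>lborel)
      = (\<integral>\<^sup>+x. ennreal c1 * ennreal (f x) + ennreal c2 * ennreal (g x) \<partial>lborel)"
    using nf ng c by (intro nn_integral_cong) (simp add: ennreal_plus ennreal_mult)
  also have "\<dots> = ennreal c1 * (\<integral>\<^sup>+x. ennreal (f x) \<partial>lborel) + ennreal c2 * (\<integral>\<^sup>+x. ennreal (g x) \<partial>lborel)"
    by (simp add: nn_integral_add nn_integral_cmult)
  also have "\<dots> \<le> ennreal c1 * ennreal F + ennreal c2 * ennreal G"
    by (intro add_mono mult_left_mono F G) auto
  also have "\<dots> = ennreal (c1 * F + c2 * G)"
    using c FG by (simp add: ennreal_plus ennreal_mult)
  finally show ?thesis .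
qed

definition P :: "real \<Rightarrow> real \<Rightarrow> real \<Rightarrow> real" where
  "P a b t = (if t \<le> 1 then t powr a else t powr b)"

lemma pw_P: "pw a b x = P a b \<bar>x\<bar> * exp (- \<bar>x\<bar>)"
  by (simp add: pw_def P_def)

lemma P_nonneg[simp]: "0 \<le> P a b t"
  by (simp add: P_def)

lemma P_zero[simp]: "P a b 0 = 0"
  by (simp add: P_def)

lemma P_le_a: "0 < t \<Longrightarrow> b \<le> a \<Longrightarrow> P a b t \<le> t powr a"
  by (auto simp: P_def intro: powr_mono)

lemma P_le_b: "0 < t \<Longrightarrow> b \<le> a \<Longrightarrow> P a b t \<le> t powr b"
  by (auto simp: P_def intro: powr_mono')

lemma P_mono: "0 < s \<Longrightarrow> s \<le> t \<Longrightarrow> a \<le> 0 \<Longrightarrow> b \<le> 0 \<Longrightarrow> P a b t \<le> P a b s"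
proof -
  assume *: "0 < s" "s \<le> t" "a \<le> 0" "b \<le> 0"
  show ?thesis
  proof (cases "t \<le> 1")
    case True then show ?thesis using * by (auto simp: P_def intro: powr_mono2')
  next
    case False
    then show ?thesis
    proof (cases "s \<le> 1")
      case True
      have "t powr b \<le> 1" using False * by (metis powr_mono powr_one_eq_one less_eq_real_def not_le powr_zero_eq_one)
      moreover have "1 \<le> s powr a" using True * by (metis powr_mono2' powr_one_eq_one)
      ultimately show ?thesis using True False by (simp add: P_def)
    next
      case f2: False then show ?thesis using * False by (auto simp: P_def intro: powr_mono2')
    qed
  qed
qed

lemma P_meas[measurable]: "(\<lambda>x. P a b x) \<in> borel_measurable borel"
  unfolding P_def by measurable

lemma Gint:
  fixes p q bp bq :: real
  assumes p: "-1 < p" and q: "-1 < q" and pq: "p + q + 1 < 0" and bp: "bp < -1" and bq: "bq < -1"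
  shows "\<exists>A\<ge>0. \<forall>Y>0. (\<integral>\<^sup>+x. ennreal (P p bp \<bar>x\<bar> * P q bq (max \<bar>x\<bar> Y / 2)) \<partial>lborel)
            \<le> ennreal (A * P (p+q+1) (max bp bq) Y)"
proof -
  have p0: "p < 0" and q0: "q < 0" using p q pq by linarith+
  define A1 where "A1 = 2 powr -q * (2/(p+1)) + 2 powr -q * (2/(-(p+q+1)))"
  define Ip where "Ip = 2/(p+1) + 2/(-(bp+1))"
  define A2 where "A2 = 2 powr -bq * Ip"
  have A1: "0 \<le> A1" using p pq by (simp add: A1_def)
  have A2: "0 \<le> A2" using p bp by (simp add: A2_def Ip_def)
  have "\<forall>Y>0. (\<integral>\<^sup>+x. ennreal (P p bp \<bar>x\<bar> * P q bq (max \<bar>x\<bar> Y / 2)) \<partial>lborel)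
            \<le> ennreal (max A1 A2 * P (p+q+1) (max bp bq) Y)"
  proof (intro allI impI)
    fix Y :: real assume Y: "0 < Y"
    show "(\<integral>\<^sup>+x. ennreal (P p bp \<bar>x\<bar> * P q bq (max \<bar>x\<bar> Y / 2)) \<partial>lborel)
            \<le> ennreal (max A1 A2 * P (p+q+1) (max bp bq) Y)"
    proof (cases "Y \<le> 1")
      case True
      have pt: "P p bp \<bar>x\<bar> * P q bq (max \<bar>x\<bar> Y / 2) \<le>
          (Y/2) powr q * (if \<bar>x\<bar> \<le> Y then \<bar>x\<bar> powr p else 0) + 2 powr -q * (if Y \<le> \<bar>x\<bar> then \<bar>x\<bar> powr (p+q) else 0)"
        for x
      proof (cases "x = 0")
        case True then show ?thesis by simp
      next
        case False
        then have t: "0 < \<bar>x\<bar>" by simp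
        have m: "0 < max \<bar>x\<bar> Y / 2" using Y by simp
        have "P p bp \<bar>x\<bar> * P q bq (max \<bar>x\<bar> Y / 2) \<le> \<bar>x\<bar> powr p * (max \<bar>x\<bar> Y / 2) powr q"
          using P_le_a[OF t, of bp p] P_le_a[OF m, of bq q] p bp q bq
          by (intro mult_mono) auto
        also have "\<dots> \<le> (Y/2) powr q * (if \<bar>x\<bar> \<le> Y then \<bar>x\<bar> powr p else 0) + 2 powr -q * (if Y \<le> \<bar>x\<bar> then \<bar>x\<bar> powr (p+q) else 0)"
        proof (cases "\<bar>x\<bar> \<le> Y")
          case True then show ?thesis by (simp add: max_def mult.commute)
        next
          case False
          then have "max \<bar>x\<bar> Y = \<bar>x\<bar>" by simp
          then have "\<bar>x\<bar> powr p * (max \<bar>x\<bar> Y / 2) powr q = 2 powr -q * \<bar>x\<bar> powr (p+q)"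
            by (simp only: powr_divide powr_add powr_minus) (simp add: field_simps)
          then show ?thesis using False by simp
        qed
        finally show ?thesis .
      qed
      have "(\<integral>\<^sup>+x. ennreal (P p bp \<bar>x\<bar> * P q bq (max \<bar>x\<bar> Y / 2)) \<partial>lborel)
          \<le> (\<integral>\<^sup>+x. ennreal ((Y/2) powr q * (if \<bar>x\<bar> \<le> Y then \<bar>x\<bar> powr p else 0) + 2 powr -q * (if Y \<le> \<bar>x\<bar> then \<bar>x\<bar> powr (p+q) else 0)) \<partial>lborel)"
        by (intro nn_integral_mono ennreal_leI pt)
      also have "\<dots> \<le> ennreal ((Y/2) powr q * (2 * (Y powr (p+1) / (p+1))) + 2 powr -q * (2 * (-(Y powr (p+q+1)) / (p+q+1))))"
        using p pq Y
        by (intro nn_lin2 int_small int_large) (auto intro!: divide_nonneg_neg simp: add.commute[of _ 1])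
      also have "(Y/2) powr q * (2 * (Y powr (p+1) / (p+1))) + 2 powr -q * (2 * (-(Y powr (p+q+1)) / (p+q+1)))
          = A1 * Y powr (p+q+1)"
      proof -
        have e0: "Y powr (p+q+1) = Y powr q * Y powr (p+1)" by (subst powr_add[symmetric]) (simp add: add_ac)
        have e1: "(Y/2) powr q * Y powr (p+1) = 2 powr -q * Y powr (p+q+1)"
          unfolding e0 by (simp only: powr_divide powr_minus) (simp add: field_simps)
        have "(Y/2) powr q * (2 * (Y powr (p+1) / (p+1))) = 2/(p+1) * ((Y/2) powr q * Y powr (p+1))" by simp
        also have "\<dots> = 2/(p+1) * (2 powr -q * Y powr (p+q+1))" by (simp only: e1)
        finally have e2: "(Y/2) powr q * (2 * (Y powr (p+1) / (p+1))) = 2/(p+1) * (2 powr -q * Y powr (p+q+1))" .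
        have ar: "s \<noteq> 0 \<Longrightarrow> c*(a*y) + a*(2*(-y/s)) = (a*c + a*(2/(-s)))*y" for a c y s :: real
          by (simp add: field_simps)
        show ?thesis unfolding e2 A1_def using pq by (intro ar) auto
      qed
      also have "\<dots> \<le> max A1 A2 * P (p+q+1) (max bp bq) Y"
        using True by (simp add: P_def mult_right_mono)
      finally show ?thesis by (meson ennreal_leI)
    next
      case False
      have pt: "P p bp \<bar>x\<bar> * P q bq (max \<bar>x\<bar> Y / 2) \<le>
          (Y/2) powr bq * (if \<bar>x\<bar> \<le> 1 then \<bar>x\<bar> powr p else 0) + (Y/2) powr bq * (if 1 \<le> \<bar>x\<bar> then \<bar>x\<bar> powr bp else 0)"
        for x
      proof -
        have m: "0 < max \<bar>x\<bar> Y / 2" using Y by simp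
        have "P q bq (max \<bar>x\<bar> Y / 2) \<le> (max \<bar>x\<bar> Y / 2) powr bq"
          using P_le_b[OF m, of bq q] bq q by simp
        also have "\<dots> \<le> (Y/2) powr bq" using Y bq by (intro powr_mono2') auto
        finally have 1: "P q bq (max \<bar>x\<bar> Y / 2) \<le> (Y/2) powr bq" .
        have 2: "P p bp \<bar>x\<bar> \<le> (if \<bar>x\<bar> \<le> 1 then \<bar>x\<bar> powr p else 0) + (if 1 \<le> \<bar>x\<bar> then \<bar>x\<bar> powr bp else 0)"
          by (simp add: P_def)
        have "P p bp \<bar>x\<bar> * P q bq (max \<bar>x\<bar> Y / 2) \<le> ((if \<bar>x\<bar> \<le> 1 then \<bar>x\<bar> powr p else 0) + (if 1 \<le> \<bar>x\<bar> then \<bar>x\<bar> powr bp else 0)) * (Y/2) powr bq"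
          using 1 2 by (intro mult_mono) auto
        then show ?thesis by (simp add: algebra_simps)
      qed
      have "(\<integral>\<^sup>+x. ennreal (P p bp \<bar>x\<bar> * P q bq (max \<bar>x\<bar> Y / 2)) \<partial>lborel)
          \<le> (\<integral>\<^sup>+x. ennreal ((Y/2) powr bq * (if \<bar>x\<bar> \<le> 1 then \<bar>x\<bar> powr p else 0) + (Y/2) powr bq * (if 1 \<le> \<bar>x\<bar> then \<bar>x\<bar> powr bp else 0)) \<partial>lborel)"
        by (intro nn_integral_mono ennreal_leI pt)
      also have "\<dots> \<le> ennreal ((Y/2) powr bq * (2 * (1 powr (p+1) / (p+1))) + (Y/2) powr bq * (2 * (-(1 powr (bp+1)) / (bp+1))))"
        using p bp
        by (intro nn_lin2 int_small int_large) (auto intro!: divide_nonneg_neg simp: add.commute[of _ 1])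
      also have "(Y/2) powr bq * (2 * (1 powr (p+1) / (p+1))) + (Y/2) powr bq * (2 * (-(1 powr (bp+1)) / (bp+1)))
          = A2 * Y powr bq"
      proof -
        have e1: "(Y/2) powr bq = 2 powr -bq * Y powr bq"
          by (simp only: powr_divide powr_minus) (simp add: field_simps)
        have ar: "s \<noteq> 0 \<Longrightarrow> t*y*(2*(1/c)) + t*y*(2*(-1/s)) = (t*(2/c + 2/(-s)))*y" for t c y s :: real
          by (simp add: field_simps)
        show ?thesis unfolding e1 A2_def Ip_def using bp by (simp only: powr_one_eq_one) (intro ar, auto)
      qed
      also have "\<dots> \<le> A2 * Y powr (max bp bq)"
        using False A2 by (intro mult_left_mono powr_mono) auto
      also have "\<dots> \<le> max A1 A2 * P (p+q+1) (max bp bq) Y"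
        using False by (simp add: P_def mult_right_mono)
      finally show ?thesis by (meson ennreal_leI)
    qed
  qed
  then show ?thesis using A1 by (intro exI[of _ "max A1 A2"]) auto
qed


lemma conv_meas:
  assumes [measurable]: "h1 \<in> borel_measurable borel" "h2 \<in> borel_measurable borel"
  shows "conv h1 h2 \<in> borel_measurable borel"
proof -
  have "(\<lambda>y. LINT x|lborel. h1 x * h2 (y - x)) \<in> borel_measurable borel"
    by (rule lborel.borel_measurable_lebesgue_integral) measurable
  then show ?thesis unfolding conv_def[abs_def] .
qed

definition bnd :: "real \<Rightarrow> real \<Rightarrow> real \<Rightarrow> (real \<Rightarrow> real) \<Rightarrow> bool" where
  "bnd C a b h \<longleftrightarrow> h \<in> borel_measurable borel \<and> (\<forall>x. 0 \<le> h x) \<and> (\<forall>x. x \<noteq> 0 \<longrightarrow> h x \<le> C * pw a b x)"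

lemma key_pt:
  fixes u v Y :: real
  assumes "0 < u" "0 < v" "Y \<le> u + v" "0 < Y" "a1 \<le> 0" "b1 \<le> 0" "a2 \<le> 0" "b2 \<le> 0"
  shows "P a1 b1 u * P a2 b2 v \<le> P a1 b1 u * P a2 b2 (max u Y / 2) + P a2 b2 v * P a1 b1 (max v Y / 2)"
proof (cases "u \<le> v")
  case True
  have "P a2 b2 v \<le> P a2 b2 (max u Y / 2)"
    using assms True by (intro P_mono) auto
  then have "P a1 b1 u * P a2 b2 v \<le> P a1 b1 u * P a2 b2 (max u Y / 2)"
    by (intro mult_left_mono) auto
  then show ?thesis by (smt (verit) P_nonneg mult_nonneg_nonneg)
next
  case False
  have "P a1 b1 u \<le> P a1 b1 (max v Y / 2)"
    using assms False by (intro P_mono) auto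
  then have "P a1 b1 u * P a2 b2 v \<le> P a2 b2 v * P a1 b1 (max v Y / 2)"
    by (subst mult.commute, intro mult_left_mono) auto
  then show ?thesis by (smt (verit) P_nonneg mult_nonneg_nonneg)
qed

lemma conv_bnd:
  assumes a: "-1 < a1" "-1 < a2" "b1 < -1" "b2 < -1" "a1 + a2 + 1 < 0"
    and h1: "bnd C1 a1 b1 h1" and h2: "bnd C2 a2 b2 h2" and C: "0 \<le> C1" "0 \<le> C2"
  shows "\<exists>C\<ge>0. bnd C (a1 + a2 + 1) (max b1 b2) (conv h1 h2)"
proof -
  have a0: "a1 \<le> 0" "a2 \<le> 0" "b1 \<le> 0" "b2 \<le> 0" using a by linarith+
  have [measurable]: "h1 \<in> borel_measurable borel" "h2 \<in> borel_measurable borel"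
    using h1 h2 by (auto simp: bnd_def)
  have h1n: "\<And>x. 0 \<le> h1 x" and h2n: "\<And>x. 0 \<le> h2 x" using h1 h2 by (auto simp: bnd_def)
  have h1b: "\<And>x. x \<noteq> 0 \<Longrightarrow> h1 x \<le> C1 * pw a1 b1 x" and h2b: "\<And>x. x \<noteq> 0 \<Longrightarrow> h2 x \<le> C2 * pw a2 b2 x"
    using h1 h2 by (auto simp: bnd_def)
  obtain A12 where A12: "A12 \<ge> 0" "\<And>Y. Y > 0 \<Longrightarrow> (\<integral>\<^sup>+x. ennreal (P a1 b1 \<bar>x\<bar> * P a2 b2 (max \<bar>x\<bar> Y / 2)) \<partial>lborel)
            \<le> ennreal (A12 * P (a1+a2+1) (max b1 b2) Y)"
    using Gint[of a1 a2 b1 b2] a by blast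
  obtain A21 where A21: "A21 \<ge> 0" "\<And>Y. Y > 0 \<Longrightarrow> (\<integral>\<^sup>+x. ennreal (P a2 b2 \<bar>x\<bar> * P a1 b1 (max \<bar>x\<bar> Y / 2)) \<partial>lborel)
            \<le> ennreal (A21 * P (a1+a2+1) (max b1 b2) Y)"
    using Gint[of a2 a1 b2 b1] a by (auto simp: add_ac max.commute)
  define C where "C = C1 * C2 * (A12 + A21)"
  have "bnd C (a1 + a2 + 1) (max b1 b2) (conv h1 h2)"
    unfolding bnd_def
  proof (intro conjI allI impI)
    show "conv h1 h2 \<in> borel_measurable borel" by (rule conv_meas) measurable
  next
    fix y show "0 \<le> conv h1 h2 y" unfolding conv_def
      by (intro Bochner_Integration.integral_nonneg mult_nonneg_nonneg h1n h2n)
  next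
    fix y :: real assume y: "y \<noteq> 0"
    define Y where "Y = \<bar>y\<bar>"
    have Y: "0 < Y" using y by (simp add: Y_def)
    define K where "K = C1 * C2 * exp (- Y)"
    have K: "0 \<le> K" using C by (simp add: K_def)
    define G12 where "G12 x = P a1 b1 \<bar>x\<bar> * P a2 b2 (max \<bar>x\<bar> Y / 2)" for x
    define G21 where "G21 x = P a2 b2 \<bar>x\<bar> * P a1 b1 (max \<bar>x\<bar> Y / 2)" for x
    have [measurable]: "G12 \<in> borel_measurable borel" "G21 \<in> borel_measurable borel"
      unfolding G12_def[abs_def] G21_def[abs_def] by measurable
    have G0: "0 \<le> G12 x" "0 \<le> G21 x" for x by (simp_all add: G12_def G21_def)
    have pt: "h1 x * h2 (y - x) \<le> K * (G12 x + G21 (y - x))" if x: "x \<noteq> 0" "x \<noteq> y" for x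
    proof -
      have u: "0 < \<bar>x\<bar>" and v: "0 < \<bar>y - x\<bar>" using x by auto
      have tri: "Y \<le> \<bar>x\<bar> + \<bar>y - x\<bar>" unfolding Y_def by linarith
      have "h1 x * h2 (y - x) \<le> (C1 * pw a1 b1 x) * (C2 * pw a2 b2 (y - x))"
        using x C by (intro mult_mono h1b h2b h1n h2n) (auto simp: pw_P)
      also have "\<dots> = C1 * C2 * (P a1 b1 \<bar>x\<bar> * P a2 b2 \<bar>y - x\<bar>) * exp (- (\<bar>x\<bar> + \<bar>y - x\<bar>))"
        by (simp add: pw_P exp_add[symmetric] exp_minus field_simps)
      also have "\<dots> \<le> C1 * C2 * (G12 x + G21 (y - x)) * exp (- Y)"
      proof (intro mult_mono mult_left_mono)
        show "P a1 b1 \<bar>x\<bar> * P a2 b2 \<bar>y - x\<bar> \<le> G12 x + G21 (y - x)"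
          unfolding G12_def G21_def using key_pt[OF u v tri Y a0(1,3,2,4)] by simp
        show "exp (- (\<bar>x\<bar> + \<bar>y - x\<bar>)) \<le> exp (- Y)" using tri by simp
      qed (use C G0 in auto)
      finally show ?thesis by (simp add: K_def mult_ac)
    qed
    have AE: "AE x in lborel. ennreal (h1 x * h2 (y - x)) \<le> ennreal (K * (G12 x + G21 (y - x)))"
    proof (rule AE_mp)
      show "AE x in lborel. x \<noteq> 0 \<and> x \<noteq> y"
        using AE_lborel_singleton[of 0] AE_lborel_singleton[of y] by (rule AE_conjI)
      show "AE x in lborel. x \<noteq> 0 \<and> x \<noteq> y \<longrightarrow> ennreal (h1 x * h2 (y - x)) \<le> ennreal (K * (G12 x + G21 (y - x)))"
        by (rule AE_I2, rule impI, rule ennreal_leI, rule pt) auto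
    qed
    have "(\<integral>\<^sup>+x. ennreal (h1 x * h2 (y - x)) \<partial>lborel) \<le> (\<integral>\<^sup>+x. ennreal (K * (G12 x + G21 (y - x))) \<partial>lborel)"
      by (rule nn_integral_mono_AE[OF AE])
    also have "\<dots> = ennreal K * ((\<integral>\<^sup>+x. ennreal (G12 x) \<partial>lborel) + (\<integral>\<^sup>+x. ennreal (G21 (y - x)) \<partial>lborel))"
      using K G0 by (simp add: ennreal_mult ennreal_plus nn_integral_add nn_integral_cmult)
    also have "(\<integral>\<^sup>+x. ennreal (G21 (y - x)) \<partial>lborel) = (\<integral>\<^sup>+x. ennreal (G21 x) \<partial>lborel)"
      using nn_integral_real_affine[of "\<lambda>x. ennreal (G21 x)" "-1" y] by simp
    also have "ennreal K * ((\<integral>\<^sup>+x. ennreal (G12 x) \<partial>lborel) + (\<integral>\<^sup>+x. ennreal (G21 x) \<partial>lborel))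
        \<le> ennreal K * (ennreal (A12 * P (a1+a2+1) (max b1 b2) Y) + ennreal (A21 * P (a1+a2+1) (max b1 b2) Y))"
      using A12(2)[OF Y] A21(2)[OF Y] unfolding G12_def G21_def by (intro mult_left_mono add_mono) auto
    also have "\<dots> = ennreal (K * (A12 + A21) * P (a1+a2+1) (max b1 b2) Y)"
    proof -
      let ?Q = "P (a1+a2+1) (max b1 b2) Y"
      have q0: "0 \<le> ?Q" by simp
      have "ennreal (A12 * ?Q) + ennreal (A21 * ?Q) = ennreal (A12 * ?Q + A21 * ?Q)"
        using A12(1) A21(1) q0 by (intro ennreal_plus[symmetric]) auto
      moreover have "ennreal K * ennreal (A12 * ?Q + A21 * ?Q) = ennreal (K * (A12 * ?Q + A21 * ?Q))"
        using K by (rule ennreal_mult'[symmetric])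
      moreover have "K * (A12 * ?Q + A21 * ?Q) = K * (A12 + A21) * ?Q" by (simp add: algebra_simps)
      ultimately show ?thesis by simp
    qed
    finally have I: "(\<integral>\<^sup>+x. ennreal (h1 x * h2 (y - x)) \<partial>lborel) \<le> ennreal (K * (A12 + A21) * P (a1+a2+1) (max b1 b2) Y)" .
    have "conv h1 h2 y = enn2real (\<integral>\<^sup>+x. ennreal (h1 x * h2 (y - x)) \<partial>lborel)"
      unfolding conv_def by (rule integral_eq_nn_integral) (auto intro: mult_nonneg_nonneg h1n h2n)
    also have "\<dots> \<le> enn2real (ennreal (K * (A12 + A21) * P (a1+a2+1) (max b1 b2) Y))"
      by (rule enn2real_mono[OF I]) simp
    also have "\<dots> = C * pw (a1 + a2 + 1) (max b1 b2) y"
    proof -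
      have "0 \<le> K * (A12 + A21) * P (a1+a2+1) (max b1 b2) Y"
        using K A12(1) A21(1) by (intro mult_nonneg_nonneg) auto
      then have "enn2real (ennreal (K * (A12 + A21) * P (a1+a2+1) (max b1 b2) Y)) = K * (A12 + A21) * P (a1+a2+1) (max b1 b2) Y"
        by simp
      also have "\<dots> = C * pw (a1 + a2 + 1) (max b1 b2) y"
        by (simp add: C_def K_def pw_P Y_def mult_ac)
      finally show ?thesis .
    qed
    finally show "conv h1 h2 y \<le> C * pw (a1 + a2 + 1) (max b1 b2) y" .
  qed
  moreover have "0 \<le> C" using C A12 A21 by (simp add: C_def)
  ultimately show ?thesis by blast
qed


lemma powr_window:
  fixes t z e b0 b :: real
  assumes "0 < t" "t \<le> z" "z \<le> t / b" "0 < b0" "b0 \<le> b" "b \<le> 1"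
  shows "z powr e \<le> (1/b0) powr \<bar>e\<bar> * t powr e"
proof (cases "e \<ge> 0")
  case True
  have b: "0 < b" using assms by linarith
  have "z powr e \<le> (t / b) powr e" using assms True by (intro powr_mono2) auto
  also have "\<dots> = (1/b) powr e * t powr e" by (simp add: powr_divide field_simps)
  also have "\<dots> \<le> (1/b0) powr e * t powr e"
    using assms b True by (intro mult_right_mono powr_mono2) (auto simp: field_simps)
  finally show ?thesis using True by simp
next
  case False
  have "z powr e \<le> t powr e" using assms False by (intro powr_mono2') auto
  also have "\<dots> \<le> (1/b0) powr \<bar>e\<bar> * t powr e"
  proof -
    have "1 \<le> (1/b0) powr \<bar>e\<bar>" using assms by (intro ge_one_powr_ge_zero) auto
    then show ?thesis by (metis mult_right_mono mult_1 powr_ge_zero)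
  qed
  finally show ?thesis .
qed

lemma final_bound:
  fixes C a b l b0 e1 e2 :: real and h :: "real \<Rightarrow> real"
  assumes hb: "bnd C a b h" and C: "0 \<le> C" and ab: "b \<le> a" and b0: "0 < b0" "b0 < 1"
    and e1: "e1 = a - l + 1" and e2: "e2 = b + 1 - l"
  shows "\<exists>K. \<forall>\<beta> \<eta>. b0 < \<beta> \<and> \<beta> < 1 \<and> \<eta> \<noteq> 0 \<longrightarrow>
    (LINT \<zeta>:{\<bar>\<eta>\<bar>..\<bar>\<eta>\<bar>/\<beta>}|lborel. h \<zeta> / \<bar>\<zeta>\<bar> powr l)
    \<le> (1 - \<beta>) * K * \<bar>\<eta>\<bar> powr (if \<bar>\<eta>\<bar> \<le> 1 then e1 else e2) * exp (- \<bar>\<eta>\<bar>)"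
proof -
  have [measurable]: "h \<in> borel_measurable borel" and hn: "\<And>x. 0 \<le> h x"
    and hle: "\<And>x. x \<noteq> 0 \<Longrightarrow> h x \<le> C * pw a b x" using hb by (auto simp: bnd_def)
  define K1 where "K1 = C * (1/b0) powr \<bar>a - l\<bar> / b0"
  define K2 where "K2 = C * (1/b0) powr \<bar>b - l\<bar> / b0"
  show ?thesis
  proof (intro exI[of _ "max K1 K2"] allI impI, elim conjE)
    fix \<beta> \<eta> :: real assume \<beta>: "b0 < \<beta>" "\<beta> < 1" and \<eta>: "\<eta> \<noteq> 0"
    define t where "t = \<bar>\<eta>\<bar>"
    have t: "0 < t" using \<eta> by (simp add: t_def)
    have \<beta>0: "0 < \<beta>" using \<beta> b0 by linarith
    have tt: "t \<le> t / \<beta>" using t \<beta>0 \<beta> by (simp add: field_simps)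
    define e where "e = (if t \<le> 1 then a - l else b - l)"
    define M where "M = (1/b0) powr \<bar>e\<bar>"
    define D where "D = C * M * t powr e * exp (- t)"
    have D0: "0 \<le> D" using C by (simp add: D_def M_def)
    have pt: "h z / \<bar>z\<bar> powr l \<le> D" if z: "t \<le> z" "z \<le> t / \<beta>" for z
    proof -
      have z0: "0 < z" using z t by linarith
      have P: "P a b z / z powr l \<le> z powr e"
      proof (cases "t \<le> 1")
        case True
        have "P a b z / z powr l \<le> z powr a / z powr l"
          using P_le_a[OF z0 ab] z0 by (intro divide_right_mono) auto
        then show ?thesis using True by (simp add: e_def powr_diff)
      next
        case False
        then have "P a b z = z powr b" using z by (simp add: P_def)
        then show ?thesis using False by (simp add: e_def powr_diff)
      qed
      have W: "z powr e \<le> M * t powr e"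
        unfolding M_def using powr_window[OF t z b0(1)] \<beta> by auto
      have "h z / \<bar>z\<bar> powr l \<le> C * pw a b z / z powr l"
      proof -
        have "h z \<le> C * pw a b z" using hle z0 by auto
        then show ?thesis using z0 by (simp add: divide_right_mono)
      qed
      also have "\<dots> = C * (P a b z / z powr l) * exp (- z)"
        using z0 by (simp add: pw_P)
      also have "\<dots> \<le> C * (M * t powr e) * exp (- t)"
        using P W C z t by (intro mult_mono mult_left_mono) (auto simp: M_def)
      finally show ?thesis by (simp add: D_def mult_ac)
    qed
    have "(LINT \<zeta>:{t..t/\<beta>}|lborel. h \<zeta> / \<bar>\<zeta>\<bar> powr l)
        = enn2real (\<integral>\<^sup>+\<zeta>. ennreal (indicator {t..t/\<beta>} \<zeta> * (h \<zeta> / \<bar>\<zeta>\<bar> powr l)) \<partial>lborel)"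
      unfolding set_lebesgue_integral_def
      by (simp only: real_scaleR_def, rule integral_eq_nn_integral) (auto simp: indicator_def intro!: AE_I2 divide_nonneg_nonneg hn)
    also have "\<dots> \<le> enn2real (\<integral>\<^sup>+\<zeta>. ennreal D * indicator {t..t/\<beta>} \<zeta> \<partial>lborel)"
    proof (rule enn2real_mono)
      show "(\<integral>\<^sup>+\<zeta>. ennreal (indicator {t..t/\<beta>} \<zeta> * (h \<zeta> / \<bar>\<zeta>\<bar> powr l)) \<partial>lborel)
          \<le> (\<integral>\<^sup>+\<zeta>. ennreal D * indicator {t..t/\<beta>} \<zeta> \<partial>lborel)"
        by (intro nn_integral_mono) (auto simp: indicator_def intro!: ennreal_leI pt)
      show "(\<integral>\<^sup>+\<zeta>. ennreal D * indicator {t..t/\<beta>} \<zeta> \<partial>lborel) < top"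
        using tt by (simp add: nn_integral_cmult_indicator ennreal_mult_less_top)
    qed
    also have "\<dots> = D * (t / \<beta> - t)"
      using tt D0 by (simp add: nn_integral_cmult_indicator ennreal_mult'[symmetric] enn2real_mult)
    also have "\<dots> \<le> (1 - \<beta>) * max K1 K2 * t powr (if t \<le> 1 then e1 else e2) * exp (- t)"
    proof -
      have "D * (t / \<beta> - t) = C * M * (1 - \<beta>) / \<beta> * (t powr e * t) * exp (- t)"
        using \<beta>0 by (simp add: D_def field_simps)
      also have "t powr e * t = t powr (if t \<le> 1 then e1 else e2)"
      proof -
        have "t powr e * t = t powr (e + 1)" using t by (simp add: powr_add)
        moreover have "e + 1 = (if t \<le> 1 then e1 else e2)" by (simp add: e_def e1 e2)
        ultimately show ?thesis by simp
      qed
      finally have eq: "D * (t / \<beta> - t) = C * M * (1 - \<beta>) / \<beta> * t powr (if t \<le> 1 then e1 else e2) * exp (- t)" .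
      have le: "C * M * (1 - \<beta>) / \<beta> \<le> (1 - \<beta>) * max K1 K2"
      proof -
        have "C * M / \<beta> \<le> C * M / b0"
          using C \<beta> b0 by (intro divide_left_mono mult_nonneg_nonneg) (auto simp: M_def)
        also have "\<dots> \<le> max K1 K2" by (simp add: K1_def K2_def M_def e_def)
        finally have m: "C * M / \<beta> \<le> max K1 K2" .
        have "C * M * (1 - \<beta>) / \<beta> = (1 - \<beta>) * (C * M / \<beta>)" by simp
        also have "\<dots> \<le> (1 - \<beta>) * max K1 K2" using m \<beta> by (intro mult_left_mono) auto
        finally show ?thesis .
      qed
      show ?thesis unfolding eq using le by (intro mult_right_mono) auto
    qed
    finally show "(LINT \<zeta>:{\<bar>\<eta>\<bar>..\<bar>\<eta>\<bar>/\<beta>}|lborel. h \<zeta> / \<bar>\<zeta>\<bar> powr l)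
        \<le> (1 - \<beta>) * max K1 K2 * \<bar>\<eta>\<bar> powr (if \<bar>\<eta>\<bar> \<le> 1 then e1 else e2) * exp (- \<bar>\<eta>\<bar>)"
      by (simp add: t_def)
  qed
qed


lemma pw_bnd: "bnd 1 a b (pw a b)"
  unfolding bnd_def by (auto simp: pw_def[abs_def])

lemma pow_bnd:
  fixes z1 z2 :: real and r :: nat
  assumes z1: "-1 < z1" and z2: "z2 < -1" and zr: "2 * real r * (z1 + 1) < 1"
  shows "Suc n \<le> 2 * r \<Longrightarrow> \<exists>C\<ge>0. bnd C (real (Suc n) * z1 + real (Suc n) - 1) z2 (conv_pow (pw z1 z2) (Suc n))"
proof (induction n)
  case 0
  show ?case using pw_bnd[of z1 z2] by (intro exI[of _ 1]) simp
next
  case (Suc n)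
  then obtain C where C: "0 \<le> C" "bnd C (real (Suc n) * z1 + real (Suc n) - 1) z2 (conv_pow (pw z1 z2) (Suc n))"
    by auto
  have n2: "real (Suc (Suc n)) \<le> 2 * real r" using Suc.prems by linarith
  have a2: "-1 < real (Suc n) * z1 + real (Suc n) - 1"
  proof -
    have "0 < real (Suc n) * (z1 + 1)" using z1 by simp
    then show ?thesis by (simp add: algebra_simps)
  qed
  have s: "z1 + (real (Suc n) * z1 + real (Suc n) - 1) + 1 < 0"
  proof -
    have "real (Suc (Suc n)) * (z1 + 1) \<le> 2 * real r * (z1 + 1)"
      using n2 z1 by (intro mult_right_mono) auto
    then show ?thesis using zr by (simp add: algebra_simps)
  qed
  obtain C' where C': "0 \<le> C'" "bnd C' (z1 + (real (Suc n) * z1 + real (Suc n) - 1) + 1) (max z2 z2) (conv (pw z1 z2) (conv_pow (pw z1 z2) (Suc n)))"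
    using conv_bnd[OF z1 a2 z2 z2 s pw_bnd C(2) zero_le_one C(1)] by blast
  have e: "z1 + (real (Suc n) * z1 + real (Suc n) - 1) + 1 = real (Suc (Suc n)) * z1 + real (Suc (Suc n)) - 1"
    by (simp add: algebra_simps)
  have "bnd C' (real (Suc (Suc n)) * z1 + real (Suc (Suc n)) - 1) z2 (conv_pow (pw z1 z2) (Suc (Suc n)))"
    using C'(2) by (simp only: e max.idem conv_pow.simps(3))
  then show ?case using C'(1) by blast
qed

theorem lemma4p2:
  fixes \<beta>0 l k1 k2 z1 z2 :: real and r :: nat
  assumes "0 < \<beta>0" "\<beta>0 < 1" "l > 0" "r \<ge> 1"
    and "k1 > -1" "k2 < -1" "z1 > -1" "z2 < -1"
    and "z1 < - (2 * real r - 1) / (2 * real r)"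
    and "2 * real r * z1 + k1 + 2 * real r < 0"
  shows "\<exists>K. \<forall>\<beta> \<eta>. \<beta>0 < \<beta> \<and> \<beta> < 1 \<and> \<eta> \<noteq> 0 \<longrightarrow>
    (LINT \<zeta>:{\<bar>\<eta>\<bar>..\<bar>\<eta>\<bar>/\<beta>}|lborel.
        conv (pw k1 k2) (conv_pow (pw z1 z2) (2 * r)) \<zeta> / \<bar>\<zeta>\<bar> powr l)
    \<le> (1 - \<beta>) * K * \<bar>\<eta>\<bar> powr (if \<bar>\<eta>\<bar> \<le> 1 then 2 * real r * z1 + k1 + 2 * real r - l + 1
                                   else max k2 z2 + 1 - l) * exp (- \<bar>\<eta>\<bar>)"
proof -
  have rpos: "0 < 2 * real r" using assms(4) by simp
  have zr: "2 * real r * (z1 + 1) < 1"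
  proof -
    have "2 * real r * z1 < - (2 * real r - 1)"
      using assms(9) rpos by (simp add: field_simps)
    then show ?thesis by (simp add: algebra_simps)
  qed
  obtain n where n: "2 * r = Suc n" using assms(4) by (metis Suc_pred mult_pos_pos nat_0_less_mult_iff zero_less_numeral less_le_trans zero_less_one)
  obtain CF where CF: "0 \<le> CF" "bnd CF (real (Suc n) * z1 + real (Suc n) - 1) z2 (conv_pow (pw z1 z2) (Suc n))"
    using pow_bnd[OF assms(7) assms(8) zr, of n] n by auto
  have rn: "real (Suc n) = 2 * real r" using n by (metis of_nat_mult of_nat_numeral)
  have a2: "-1 < 2 * real r * z1 + 2 * real r - 1"
  proof -
    have "0 < 2 * real r * (z1 + 1)" using rpos assms(7) by simp
    then show ?thesis by (simp add: algebra_simps)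
  qed
  have s: "k1 + (2 * real r * z1 + 2 * real r - 1) + 1 < 0" using assms(10) by simp
  obtain CH where CH: "0 \<le> CH" "bnd CH (k1 + (2 * real r * z1 + 2 * real r - 1) + 1) (max k2 z2)
      (conv (pw k1 k2) (conv_pow (pw z1 z2) (2 * r)))"
  proof -
    have CF2: "bnd CF (2 * real r * z1 + 2 * real r - 1) z2 (conv_pow (pw z1 z2) (2 * r))"
      using CF(2) unfolding n[symmetric] by simp
    show ?thesis using conv_bnd[OF assms(5) a2 assms(6) assms(8) s pw_bnd CF2 zero_le_one CF(1)] that by blast
  qed
  show ?thesis
    by (rule final_bound[OF CH(2) CH(1) _ assms(1,2)]) (use assms s a2 in \<open>auto simp: algebra_simps\<close>)
qed

end
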